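(* Let $n\ge 1$, $q\in\mathbb{C}^\times$, and let $\mathcal A$ be an associative unital algebra containing mutually commuting elements $\lambda_1,\dots,\lambda_n$ such that all differences $\lambda_i-\lambda_k$ ($i\neq k$) are invertible, and mutually commuting invertible elements $\mu_1,\dots,\mu_n$, satisfying $$\mu_j\lambda_j=q\,\lambda_j\mu_j,\qquad \mu_j\lambda_i=\lambda_i\mu_j\quad(i\neq j).$$ With $S_i(\lambda)=\prod_{k\neq i}(\lambda-\lambda_k)/\prod_{k\neq i}(\lambda_i-\lambda_k)$, define for $\lambda\in\mathbb{C}$ $$2P(\lambda)=\Big(\lambda+\sum_{i=1}^n\lambda_i\Big)\prod_{i=1}^n(\lambda-\lambda_i)+\sum_{i=1}^n S_i(\lambda)\,(\mu_i+\mu_i^{-1}),$$ (with functions of the $\lambda_k$ to the left of $\mu_i^{\pm1}$). Then $[P(\lambda),P(\lambda')]=0$ for all $\lambda,\lambda'\in\mathbb{C}$.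
   Context: $2P(\lambda)$ is the polynomial of degree $n+1$ with leading term $\lambda^{n+1}$ and no $\lambda^n$ term (center-of-mass frame) that solves the quantum Baxter equations $2P(\lambda_i)=\mu_i+\mu_i^{-1}$ associated with the Toda chain spectral curve $\mu+\mu^{-1}=2P(\lambda)$. *)

theory Defs
  imports Complex_Main
begin

definition ring_inv :: "'a::ring_1 \<Rightarrow> 'a" where
  "ring_inv x = (THE y. x * y = 1 \<and> y * x = 1)"

definition invertible_el :: "'a::ring_1 \<Rightarrow> bool" where
  "invertible_el x \<longleftrightarrow> (\<exists>y. x * y = 1 \<and> y * x = 1)"

text \<open>A unital associative complex algebra is modelled as a ring_1 type together
  with a unital ring homomorphism sc from the complex numbers into its centre.\<close>
definition central_scalar_hom :: "(complex \<Rightarrow> 'a::ring_1) \<Rightarrow> bool" where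
  "central_scalar_hom sc \<longleftrightarrow> sc 1 = 1 \<and> (\<forall>x y. sc (x + y) = sc x + sc y)
     \<and> (\<forall>x y. sc (x * y) = sc x * sc y) \<and> (\<forall>x a. sc x * a = a * sc x)"

definition S_poly :: "(complex \<Rightarrow> 'a::ring_1) \<Rightarrow> nat \<Rightarrow> (nat \<Rightarrow> 'a) \<Rightarrow> nat \<Rightarrow> complex \<Rightarrow> 'a" where
  "S_poly sc n lam i z =
     prod_list (map (\<lambda>k. sc z - lam k) (filter (\<lambda>k. k \<noteq> i) [0..<n]))
     * ring_inv (prod_list (map (\<lambda>k. lam i - lam k) (filter (\<lambda>k. k \<noteq> i) [0..<n])))"

definition P_op :: "(complex \<Rightarrow> 'a::ring_1) \<Rightarrow> nat \<Rightarrow> (nat \<Rightarrow> 'a) \<Rightarrow> (nat \<Rightarrow> 'a) \<Rightarrow> complex \<Rightarrow> 'a" where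
  "P_op sc n lam mu z = sc (1/2) *
     ((sc z + (\<Sum>i<n. lam i)) * prod_list (map (\<lambda>i. sc z - lam i) [0..<n])
      + (\<Sum>i<n. S_poly sc n lam i z * (mu i + ring_inv (mu i))))"

end

theory Submission
  imports Defs
begin


lemma lc: "(x::'a::ring_1)*y=y*x \<Longrightarrow> x*(y*z) = y*(x*z)" by (metis mult.assoc)

lemma inv_unique:
  fixes x y :: "'a::ring_1" assumes "x*y=1" "y*x=1" shows "ring_inv x = y"
  unfolding ring_inv_def
proof (rule the_equality)
  show "x*y=1 \<and> y*x=1" using assms by simp
  fix y' assume a: "x*y'=1 \<and> y'*x=1"
  then have "y' = y'*(x*y)" using assms by simp
  also have "\<dots> = (y'*x)*y" by (simp add: mult.assoc)
  finally show "y' = y" using a by simp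
qed

lemma inv_lr:
  fixes x :: "'a::ring_1" assumes "invertible_el x"
  shows "x*ring_inv x = 1" "ring_inv x*x = 1"
proof -
  from assms obtain y where y: "x*y=1" "y*x=1" unfolding invertible_el_def by blast
  then have "ring_inv x = y" by (rule inv_unique)
  with y show "x*ring_inv x = 1" "ring_inv x*x = 1" by auto
qed

lemma invertible_I: "(x::'a::ring_1)*y=1 \<Longrightarrow> y*x=1 \<Longrightarrow> invertible_el x"
  unfolding invertible_el_def by blast

lemma inv_inv_el: "invertible_el (x::'a::ring_1) \<Longrightarrow> invertible_el (ring_inv x)"
  using inv_lr invertible_I by metis

lemma inv_comm:
  fixes x y :: "'a::ring_1"
  assumes "invertible_el y" "x*y=y*x" shows "x*ring_inv y = ring_inv y*x"
proof -
  let ?v = "ring_inv y"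
  have "x*?v = (?v*y)*x*?v" using inv_lr[OF assms(1)] by simp
  also have "\<dots> = ?v*(x*y)*?v" using assms(2) by (simp add: mult.assoc)
  also have "\<dots> = ?v*x*(y*?v)" by (simp add: mult.assoc)
  also have "\<dots> = ?v*x" using inv_lr[OF assms(1)] by simp
  finally show ?thesis .
qed

lemma inv_mult:
  fixes x y :: "'a::ring_1"
  assumes "invertible_el x" "invertible_el y"
  shows "invertible_el (x*y)" "ring_inv (x*y) = ring_inv y * ring_inv x"
proof -
  have a: "(x*y)*(ring_inv y * ring_inv x) = 1"
  proof -
    have "(x*y)*(ring_inv y * ring_inv x) = x*(y*ring_inv y)*ring_inv x" by (simp add: mult.assoc)
    thus ?thesis using inv_lr(1)[OF assms(1)] inv_lr(1)[OF assms(2)] by simp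
  qed
  have b: "(ring_inv y * ring_inv x)*(x*y) = 1"
  proof -
    have "(ring_inv y * ring_inv x)*(x*y) = ring_inv y*(ring_inv x*x)*y" by (simp add: mult.assoc)
    thus ?thesis using inv_lr(2)[OF assms(1)] inv_lr(2)[OF assms(2)] by simp
  qed
  show "invertible_el (x*y)" using a b by (rule invertible_I)
  show "ring_inv (x*y) = ring_inv y * ring_inv x" using a b by (rule inv_unique)
qed

lemma inv_neg:
  fixes x :: "'a::ring_1"
  assumes "invertible_el x"
  shows "invertible_el (-x)" "ring_inv (-x) = - ring_inv x"
proof -
  have a: "(-x)*(-ring_inv x) = 1" "(-ring_inv x)*(-x) = 1" using inv_lr[OF assms] by simp_all
  show "invertible_el (-x)" using a by (rule invertible_I)
  show "ring_inv (-x) = - ring_inv x" using a by (rule inv_unique)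
qed

lemma conj_inv:
  fixes m x y :: "'a::ring_1"
  assumes m: "invertible_el m" and x: "invertible_el x" and e: "m*x = y*m"
  shows "invertible_el y" "m*ring_inv x = ring_inv y*m"
proof -
  let ?mi = "ring_inv m" and ?xi = "ring_inv x"
  have y: "y = m*x*?mi"
  proof -
    have "m*x*?mi = y*(m*?mi)" using e by (simp add: mult.assoc)
    thus ?thesis using inv_lr[OF m] by simp
  qed
  have a: "y*(m*?xi*?mi) = 1"
  proof -
    have "y*(m*?xi*?mi) = m*x*(?mi*m)*?xi*?mi" unfolding y by (simp add: mult.assoc)
    also have "\<dots> = m*(x*?xi)*?mi" using inv_lr[OF m] by (simp add: mult.assoc)
    finally show ?thesis using inv_lr[OF m] inv_lr[OF x] by simp
  qed
  have b: "(m*?xi*?mi)*y = 1"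
  proof -
    have "(m*?xi*?mi)*y = m*?xi*(?mi*m)*x*?mi" unfolding y by (simp add: mult.assoc)
    also have "\<dots> = m*(?xi*x)*?mi" using inv_lr[OF m] by (simp add: mult.assoc)
    finally show ?thesis using inv_lr[OF m] inv_lr[OF x] by simp
  qed
  show "invertible_el y" using a b by (rule invertible_I)
  have "ring_inv y = m*?xi*?mi" using a b by (rule inv_unique)
  then have "ring_inv y*m = m*?xi*(?mi*m)" by (simp add: mult.assoc)
  then show "m*ring_inv x = ring_inv y*m" using inv_lr[OF m] by simp
qed

lemma prod_list_conj:
  fixes m :: "'a::ring_1"
  shows "(\<And>k. k\<in>set xs \<Longrightarrow> m*f k = g k*m) \<Longrightarrow> m*prod_list (map f xs) = prod_list (map g xs)*m"
proof (induction xs)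
  case Nil then show ?case by simp
next
  case (Cons k ys)
  have "m*prod_list (map f (k#ys)) = (m*f k)*prod_list (map f ys)" by (simp add: mult.assoc)
  also have "\<dots> = g k*(m*prod_list (map f ys))" using Cons.prems by (simp add: mult.assoc)
  also have "\<dots> = g k*(prod_list (map g ys)*m)" using Cons by simp
  finally show ?case by (simp add: mult.assoc)
qed

lemma prod_list_inv:
  fixes f :: "nat \<Rightarrow> 'a::ring_1"
  shows "(\<And>k. k\<in>set xs \<Longrightarrow> invertible_el (f k)) \<Longrightarrow> invertible_el (prod_list (map f xs))"
proof (induction xs)
  case Nil then show ?case by (simp add: invertible_I[of 1 1])
next
  case (Cons k ys) then show ?case by (simp add: inv_mult(1))
qed

lemma prod_factor:
  fixes f :: "nat \<Rightarrow> 'a::ring_1"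
  shows "distinct xs \<Longrightarrow> i \<in> set xs \<Longrightarrow> (\<And>k. k\<in>set xs \<Longrightarrow> f i*f k = f k*f i)
   \<Longrightarrow> prod_list (map f xs) = f i * prod_list (map f (filter (\<lambda>k. k\<noteq>i) xs))"
proof (induction xs)
  case Nil then show ?case by simp
next
  case (Cons k ys)
  show ?case
  proof (cases "k = i")
    case True
    then have "filter (\<lambda>k. k\<noteq>i) ys = ys" using Cons.prems(1) by (auto simp: filter_id_conv)
    then show ?thesis using True by simp
  next
    case False
    then have "i \<in> set ys" using Cons.prems by auto
    then have "prod_list (map f ys) = f i * prod_list (map f (filter (\<lambda>k. k\<noteq>i) ys))"
      using Cons by auto
    then have "prod_list (map f (k#ys)) = f k * (f i * prod_list (map f (filter (\<lambda>k. k\<noteq>i) ys)))" by simp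
    also have "\<dots> = f i * (f k * prod_list (map f (filter (\<lambda>k. k\<noteq>i) ys)))"
      using Cons.prems(3)[of k] by (intro lc) simp
    finally show ?thesis using False by simp
  qed
qed

lemma filter_swap: "filter (\<lambda>k. k\<noteq>j \<and> k\<noteq>i) xs = filter (\<lambda>k. k\<noteq>i \<and> k\<noteq>j) xs"
  by (induct xs) auto

lemma lin:
  fixes a b c d x :: "'a::ab_group_add"
  assumes "a - b = x" "c - d = -x" shows "a + c = b + d"
proof -
  have "a + c - (b+d) = (a-b) + (c-d)" by (simp add: algebra_simps)
  also have "\<dots> = 0" using assms by simp
  finally show ?thesis by simp
qed

lemma absK:
  fixes Z W li lj A B Rz Rw ei ej u p r :: "'a::ring_1"
  assumes C: "\<And>x y. x \<in> {Z,W,li,lj,A,B,Rz,Rw,ei,ej,u,p,r} \<Longrightarrow> y \<in> {Z,W,li,lj,A,B,Rz,Rw,ei,ej,u,p,r} \<Longrightarrow> x*y=y*x"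
   and hp: "p*(lj-A*li) = 1" and hr: "r*(li-B*lj) = 1"
  shows "((Z-lj)*Rz*(ei*u)) * ((W-A*li)*Rw*(ej*p)) + ((Z-li)*Rz*(ej*(-u)))*((W-B*lj)*Rw*(ei*r))
       = ((W-lj)*Rw*(ei*u)) * ((Z-A*li)*Rz*(ej*p)) + ((W-li)*Rw*(ej*(-u)))*((Z-B*lj)*Rz*(ei*r))"
proof -
  have C2: "\<And>x y c. x \<in> {Z,W,li,lj,A,B,Rz,Rw,ei,ej,u,p,r} \<Longrightarrow> y \<in> {Z,W,li,lj,A,B,Rz,Rw,ei,ej,u,p,r} \<Longrightarrow> x*(y*c)=y*(x*c)"
    by (rule lc, rule C, assumption+)
  define K where "K = Rz*Rw*ei*ej*u"
  have h1: "((Z-lj)*Rz*(ei*u)) * ((W-A*li)*Rw*(ej*p)) - ((W-lj)*Rw*(ei*u)) * ((Z-A*li)*Rz*(ej*p))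
     = K*((p*(lj-A*li))*(Z-W))"
    unfolding K_def by (simp add: algebra_simps C C2)
  have h2: "((Z-li)*Rz*(ej*(-u)))*((W-B*lj)*Rw*(ei*r)) - ((W-li)*Rw*(ej*(-u)))*((Z-B*lj)*Rz*(ei*r))
     = -(K*((r*(li-B*lj))*(Z-W)))"
    unfolding K_def by (simp add: algebra_simps C C2)
  from h1 h2 hp hr show ?thesis by (intro lin) simp_all
qed

lemma absF:
  fixes Z W li t A Nz Nw d :: "'a::ring_1"
  assumes C: "\<And>x y. x \<in> {Z,W,li,t,A,Nz,Nw,d} \<Longrightarrow> y \<in> {Z,W,li,t,A,Nz,Nw,d} \<Longrightarrow> x*y=y*x"
  shows "(Z+(li+t))*((Z-li)*Nz)*(Nw*d) + (Nz*d)*((W+(A*li+t))*((W-A*li)*Nw))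
       = (W+(li+t))*((W-li)*Nw)*(Nz*d) + (Nw*d)*((Z+(A*li+t))*((Z-A*li)*Nz))"
proof -
  have C2: "\<And>x y c. x \<in> {Z,W,li,t,A,Nz,Nw,d} \<Longrightarrow> y \<in> {Z,W,li,t,A,Nz,Nw,d} \<Longrightarrow> x*(y*c)=y*(x*c)"
    by (rule lc, rule C, assumption+)
  show ?thesis by (simp add: algebra_simps C C2)
qed

lemma abs4:
  fixes x y u v :: "'a::ring_1"
  assumes C: "\<And>a b. a \<in> {x,y,u,v} \<Longrightarrow> b \<in> {x,y,u,v} \<Longrightarrow> a*b=b*a"
  shows "x*y*(u*v) = u*y*(x*v)"
proof -
  have C2: "\<And>a b c. a \<in> {x,y,u,v} \<Longrightarrow> b \<in> {x,y,u,v} \<Longrightarrow> a*(b*c)=b*(a*c)"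
    by (rule lc, rule C, assumption+)
  show ?thesis by (simp add: mult.assoc C C2)
qed



locale toda =
  fixes sc :: "complex \<Rightarrow> 'a::ring_1" and n :: nat and lam :: "nat \<Rightarrow> 'a"
  assumes CS: "central_scalar_hom sc"
    and LC: "\<And>i k. i<n \<Longrightarrow> k<n \<Longrightarrow> lam i*lam k = lam k*lam i"
    and GD: "\<And>i k. i<n \<Longrightarrow> k<n \<Longrightarrow> i\<noteq>k \<Longrightarrow> invertible_el (lam i - lam k)"
begin

lemma sc_central: "sc x*a = a*sc x" using CS unfolding central_scalar_hom_def by blast
lemma sc_mult: "sc (x*y) = sc x*sc y" using CS unfolding central_scalar_hom_def by blast
lemma sc_add: "sc (x+y) = sc x+sc y" using CS unfolding central_scalar_hom_def by blast
lemma sc_one: "sc 1 = 1" using CS unfolding central_scalar_hom_def by blast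

definition cent1 where "cent1 = {x. \<forall>k<n. x*lam k = lam k*x}"
definition ccs where "ccs = {x. \<forall>y\<in>cent1. x*y = y*x}"

lemma lam_cent1: "k<n \<Longrightarrow> lam k \<in> cent1" unfolding cent1_def using LC by auto

lemma ccs_comm: "x\<in>ccs \<Longrightarrow> y\<in>ccs \<Longrightarrow> x*y=y*x"
proof -
  assume x: "x\<in>ccs" and y: "y\<in>ccs"
  have "y \<in> cent1" unfolding cent1_def
  proof (intro CollectI allI impI)
    fix k assume "k<n" then show "y*lam k = lam k*y" using y lam_cent1 unfolding ccs_def by blast
  qed
  then show ?thesis using x unfolding ccs_def by blast
qed

lemma ccs_lam: "k<n \<Longrightarrow> lam k \<in> ccs" unfolding ccs_def cent1_def by auto
lemma ccs_sc: "sc x \<in> ccs" unfolding ccs_def using sc_central by auto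
lemma ccs_add: "x\<in>ccs \<Longrightarrow> y\<in>ccs \<Longrightarrow> x+y\<in>ccs" unfolding ccs_def by (simp add: algebra_simps)
lemma ccs_diff: "x\<in>ccs \<Longrightarrow> y\<in>ccs \<Longrightarrow> x-y\<in>ccs" unfolding ccs_def by (simp add: algebra_simps)
lemma ccs_minus: "x\<in>ccs \<Longrightarrow> -x\<in>ccs" unfolding ccs_def by simp
lemma ccs_one: "1\<in>ccs" unfolding ccs_def by simp
lemma ccs_mult: "x\<in>ccs \<Longrightarrow> y\<in>ccs \<Longrightarrow> x*y\<in>ccs"
  unfolding ccs_def
proof (intro CollectI ballI)
  fix c assume x: "x \<in> {x. \<forall>y\<in>cent1. x * y = y * x}" and y: "y \<in> {x. \<forall>y\<in>cent1. x * y = y * x}"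
    and c: "c \<in> cent1"
  have 1: "y*c=c*y" using y c by blast
  have 2: "x*c=c*x" using x c by blast
  have "x*y*c = x*(c*y)" by (simp add: mult.assoc 1)
  also have "\<dots> = (x*c)*y" by (simp add: mult.assoc)
  also have "\<dots> = c*(x*y)" by (simp add: mult.assoc 2)
  finally show "x*y*c = c*(x*y)" .
qed
lemma ccs_inv: "x\<in>ccs \<Longrightarrow> invertible_el x \<Longrightarrow> ring_inv x\<in>ccs"
proof -
  assume x: "x\<in>ccs" and i: "invertible_el x"
  show ?thesis unfolding ccs_def
  proof (intro CollectI ballI)
    fix c assume "c \<in> cent1"
    then have "c*x = x*c" using x unfolding ccs_def by auto
    then show "ring_inv x*c = c*ring_inv x" using inv_comm[OF i] by auto
  qed
qed
lemma ccs_prod: "(\<And>k. k\<in>set xs \<Longrightarrow> f k\<in>ccs) \<Longrightarrow> prod_list (map f xs) \<in> ccs"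
  by (induction xs) (auto intro: ccs_one ccs_mult)
lemma ccs_sum: "finite A \<Longrightarrow> (\<And>k. k\<in>A \<Longrightarrow> f k\<in>ccs) \<Longrightarrow> sum f A \<in> ccs"
proof (induction A rule: finite_induct)
  case empty then show ?case unfolding ccs_def by simp
next
  case (insert x F) then show ?case by (auto intro: ccs_add)
qed

definition NN where "NN L i z = prod_list (map (\<lambda>k. sc z - L k) (filter (\<lambda>k. k\<noteq>i) [0..<n]))"
definition DD where "DD L i = prod_list (map (\<lambda>k. L i - L k) (filter (\<lambda>k. k\<noteq>i) [0..<n]))"
definition FF where "FF L z = (sc z + (\<Sum>i<n. L i)) * prod_list (map (\<lambda>i. sc z - L i) [0..<n])"
definition okL where "okL L \<longleftrightarrow> (\<forall>k<n. L k \<in> ccs) \<and> (\<forall>k<n. \<forall>l<n. k\<noteq>l \<longrightarrow> invertible_el (L k - L l))"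
definition Lsh where "Lsh i a = lam(i := sc a * lam i)"

lemma S_eq: "S_poly sc n L i z = NN L i z * ring_inv (DD L i)"
  unfolding S_poly_def NN_def DD_def ..

lemma okL_lam: "okL lam" unfolding okL_def using ccs_lam GD by auto

lemma NN_ccs: "okL L \<Longrightarrow> NN L i z \<in> ccs"
  unfolding NN_def okL_def by (auto intro!: ccs_prod ccs_diff ccs_sc)
lemma DD_ccs: "okL L \<Longrightarrow> i<n \<Longrightarrow> DD L i \<in> ccs"
  unfolding DD_def okL_def by (auto intro!: ccs_prod ccs_diff)
lemma DD_inv: "okL L \<Longrightarrow> i<n \<Longrightarrow> invertible_el (DD L i)"
  unfolding DD_def okL_def by (auto intro!: prod_list_inv)
lemma S_ccs: "okL L \<Longrightarrow> i<n \<Longrightarrow> S_poly sc n L i z \<in> ccs"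
  unfolding S_eq by (intro ccs_mult NN_ccs ccs_inv DD_ccs DD_inv)
lemma FF_ccs: "okL L \<Longrightarrow> FF L z \<in> ccs"
  unfolding FF_def okL_def by (auto intro!: ccs_prod ccs_diff ccs_sc ccs_mult ccs_add ccs_sum)

lemma S_conj:
  assumes L: "okL L" and m: "invertible_el m" and c: "\<And>k. k<n \<Longrightarrow> m*L k = L' k*m" and j: "j<n"
  shows "m*S_poly sc n L j z = S_poly sc n L' j z*m"
proof -
  have n1: "m*NN L j z = NN L' j z*m" unfolding NN_def
    by (rule prod_list_conj) (simp add: algebra_simps c sc_central)
  have d1: "m*DD L j = DD L' j*m" unfolding DD_def
    by (rule prod_list_conj) (simp add: algebra_simps c j)
  have d2: "m*ring_inv (DD L j) = ring_inv (DD L' j)*m"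
    by (rule conj_inv(2)[OF m DD_inv[OF L j] d1])
  have "m*S_poly sc n L j z = (m*NN L j z)*ring_inv (DD L j)" unfolding S_eq by (simp add: mult.assoc)
  also have "\<dots> = NN L' j z*(m*ring_inv (DD L j))" unfolding n1 by (simp add: mult.assoc)
  also have "\<dots> = S_poly sc n L' j z*m" unfolding d2 S_eq by (simp add: mult.assoc)
  finally show ?thesis .
qed

lemma FF_conj:
  assumes c: "\<And>k. k<n \<Longrightarrow> m*L k = L' k*m"
  shows "m*FF L z = FF L' z*m"
proof -
  have p: "m*prod_list (map (\<lambda>i. sc z - L i) [0..<n]) = prod_list (map (\<lambda>i. sc z - L' i) [0..<n])*m"
    by (rule prod_list_conj) (simp add: algebra_simps c sc_central)
  have s: "m*(\<Sum>i<n. L i) = (\<Sum>i<n. L' i)*m"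
    by (simp add: sum_distrib_left sum_distrib_right c)
  have s2: "m*(sc z + (\<Sum>i<n. L i)) = (sc z + (\<Sum>i<n. L' i))*m"
    using s by (simp add: algebra_simps sc_central)
  have "m*FF L z = (m*(sc z + (\<Sum>i<n. L i)))*prod_list (map (\<lambda>i. sc z - L i) [0..<n])"
    unfolding FF_def by (simp add: mult.assoc)
  also have "\<dots> = (sc z + (\<Sum>i<n. L' i))*(m*prod_list (map (\<lambda>i. sc z - L i) [0..<n]))"
    unfolding s2 by (simp add: mult.assoc)
  also have "\<dots> = FF L' z*m" unfolding p FF_def by (simp add: mult.assoc)
  finally show ?thesis .
qed

lemma okL_sh:
  assumes i: "i<n" and m: "invertible_el m" and c: "\<And>k. k<n \<Longrightarrow> m*lam k = Lsh i a k*m"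
  shows "okL (Lsh i a)"
  unfolding okL_def
proof (intro conjI allI impI)
  fix k assume "k<n" then show "Lsh i a k \<in> ccs"
    unfolding Lsh_def using i by (auto intro: ccs_mult ccs_sc ccs_lam)
next
  fix k l assume kl: "k<n" "l<n" "k\<noteq>l"
  have "m*(lam k - lam l) = (Lsh i a k - Lsh i a l)*m"
    using c kl by (simp add: algebra_simps)
  then show "invertible_el (Lsh i a k - Lsh i a l)" using conj_inv(1)[OF m GD[OF kl]] by blast
qed

end


context toda
begin

lemma one_factor:
  assumes "i<n" "\<And>k. k<n \<Longrightarrow> f k\<in>ccs"
  shows "prod_list (map f [0..<n]) = f i * prod_list (map f (filter (\<lambda>k. k\<noteq>i) [0..<n]))"
  by (rule prod_factor) (use assms in \<open>auto intro: ccs_comm\<close>)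

lemma two_factor:
  assumes "i<n" "j<n" "i\<noteq>j" "\<And>k. k<n \<Longrightarrow> f k\<in>ccs"
  shows "prod_list (map f (filter (\<lambda>k. k\<noteq>i) [0..<n])) = f j * prod_list (map f (filter (\<lambda>k. k\<noteq>i \<and> k\<noteq>j) [0..<n]))"
proof -
  have "prod_list (map f (filter (\<lambda>k. k\<noteq>i) [0..<n])) = f j * prod_list (map f (filter (\<lambda>k. k\<noteq>j) (filter (\<lambda>k. k\<noteq>i) [0..<n])))"
    by (rule prod_factor) (use assms in \<open>auto intro: ccs_comm\<close>)
  then show ?thesis by (simp add: filter_filter)
qed

lemma NN_sh: "NN (Lsh i c) i z = NN lam i z"
  unfolding NN_def Lsh_def by (intro arg_cong[where f=prod_list] map_cong) auto

lemma Ksym: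
  assumes i: "i<n" and j: "j<n" and La: "okL (Lsh i a)" and Lb: "okL (Lsh j b)"
  shows "S_poly sc n lam i z * S_poly sc n (Lsh i a) j w + S_poly sc n lam j z * S_poly sc n (Lsh j b) i w
       = S_poly sc n lam i w * S_poly sc n (Lsh i a) j z + S_poly sc n lam j w * S_poly sc n (Lsh j b) i z"
proof (cases "i = j")
  case True
  have t: "S_poly sc n lam i z * S_poly sc n (Lsh i c) i w = S_poly sc n lam i w * S_poly sc n (Lsh i c) i z"
    if Lc: "okL (Lsh i c)" for c
    unfolding S_eq NN_sh
  proof (rule abs4)
    have "{NN lam i z, ring_inv (DD lam i), NN lam i w, ring_inv (DD (Lsh i c) i)} \<subseteq> ccs"
      using i Lc okL_lam by (auto intro!: NN_ccs ccs_inv DD_ccs DD_inv)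
    then show "\<And>x y. x \<in> {NN lam i z, ring_inv (DD lam i), NN lam i w, ring_inv (DD (Lsh i c) i)} \<Longrightarrow>
        y \<in> {NN lam i z, ring_inv (DD lam i), NN lam i w, ring_inv (DD (Lsh i c) i)} \<Longrightarrow> x*y = y*x"
      using ccs_comm by blast
  qed
  have Lb': "okL (Lsh i b)" using Lb True by simp
  have "S_poly sc n lam i z * S_poly sc n (Lsh i a) i w + S_poly sc n lam i z * S_poly sc n (Lsh i b) i w
       = S_poly sc n lam i w * S_poly sc n (Lsh i a) i z + S_poly sc n lam i w * S_poly sc n (Lsh i b) i z"
    using t[OF La] t[OF Lb'] by (rule arg_cong2[where f="(+)"])
  then show ?thesis using True by simp
next
  case False
  define Rz where "Rz = prod_list (map (\<lambda>k. sc z - lam k) (filter (\<lambda>k. k\<noteq>i \<and> k\<noteq>j) [0..<n]))"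
  define Rw where "Rw = prod_list (map (\<lambda>k. sc w - lam k) (filter (\<lambda>k. k\<noteq>i \<and> k\<noteq>j) [0..<n]))"
  define Ei where "Ei = prod_list (map (\<lambda>k. lam i - lam k) (filter (\<lambda>k. k\<noteq>i \<and> k\<noteq>j) [0..<n]))"
  define Ej where "Ej = prod_list (map (\<lambda>k. lam j - lam k) (filter (\<lambda>k. k\<noteq>i \<and> k\<noteq>j) [0..<n]))"
  have ji: "j \<noteq> i" using False by simp
  have cc1: "\<And>x k. k<n \<Longrightarrow> sc x - lam k \<in> ccs" by (intro ccs_diff ccs_sc ccs_lam)
  have cc2: "\<And>l k. l<n \<Longrightarrow> k<n \<Longrightarrow> lam l - lam k \<in> ccs" by (intro ccs_diff ccs_lam)
  have ccLa: "\<And>k. k<n \<Longrightarrow> Lsh i a k \<in> ccs" using La unfolding okL_def by blast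
  have ccLb: "\<And>k. k<n \<Longrightarrow> Lsh j b k \<in> ccs" using Lb unfolding okL_def by blast
  have N1: "\<And>x. NN lam i x = (sc x - lam j) * prod_list (map (\<lambda>k. sc x - lam k) (filter (\<lambda>k. k\<noteq>i \<and> k\<noteq>j) [0..<n]))"
    unfolding NN_def by (rule two_factor[OF i j False]) (rule cc1)
  have N2: "\<And>x. NN lam j x = (sc x - lam i) * prod_list (map (\<lambda>k. sc x - lam k) (filter (\<lambda>k. k\<noteq>i \<and> k\<noteq>j) [0..<n]))"
    unfolding NN_def filter_swap[of j i, symmetric] by (rule two_factor[OF j i ji]) (rule cc1)
  have mapLa: "\<And>f. map (\<lambda>k. f (Lsh i a k)) (filter (\<lambda>k. k\<noteq>i \<and> k\<noteq>j) [0..<n]) = map (\<lambda>k. f (lam k)) (filter (\<lambda>k. k\<noteq>i \<and> k\<noteq>j) [0..<n])"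
    unfolding Lsh_def by (intro map_cong) auto
  have mapLb: "\<And>f. map (\<lambda>k. f (Lsh j b k)) (filter (\<lambda>k. k\<noteq>i \<and> k\<noteq>j) [0..<n]) = map (\<lambda>k. f (lam k)) (filter (\<lambda>k. k\<noteq>i \<and> k\<noteq>j) [0..<n])"
    unfolding Lsh_def by (intro map_cong) auto
  have Li: "Lsh i a i = sc a * lam i" "Lsh i a j = lam j" "Lsh j b j = sc b * lam j" "Lsh j b i = lam i"
    using False by (auto simp: Lsh_def)
  have N3: "\<And>x. NN (Lsh i a) j x = (sc x - sc a * lam i) * prod_list (map (\<lambda>k. sc x - lam k) (filter (\<lambda>k. k\<noteq>i \<and> k\<noteq>j) [0..<n]))"
  proof -
    fix x
    have "NN (Lsh i a) j x = (sc x - Lsh i a i) * prod_list (map (\<lambda>k. sc x - Lsh i a k) (filter (\<lambda>k. k\<noteq>i \<and> k\<noteq>j) [0..<n]))"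
      unfolding NN_def filter_swap[of j i, symmetric] by (rule two_factor[OF j i ji]) (intro ccs_diff ccs_sc ccLa)
    then show "?thesis x" by (simp only: mapLa Li)
  qed
  have N4: "\<And>x. NN (Lsh j b) i x = (sc x - sc b * lam j) * prod_list (map (\<lambda>k. sc x - lam k) (filter (\<lambda>k. k\<noteq>i \<and> k\<noteq>j) [0..<n]))"
  proof -
    fix x
    have "NN (Lsh j b) i x = (sc x - Lsh j b j) * prod_list (map (\<lambda>k. sc x - Lsh j b k) (filter (\<lambda>k. k\<noteq>i \<and> k\<noteq>j) [0..<n]))"
      unfolding NN_def by (rule two_factor[OF i j False]) (intro ccs_diff ccs_sc ccLb)
    then show "?thesis x" by (simp only: mapLb Li)
  qed
  have D1: "DD lam i = (lam i - lam j) * Ei"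
    unfolding DD_def Ei_def by (rule two_factor[OF i j False]) (intro cc2 i)
  have D2: "DD lam j = (lam j - lam i) * Ej"
    unfolding DD_def Ej_def filter_swap[of j i, symmetric] by (rule two_factor[OF j i ji]) (intro cc2 j)
  have D3: "DD (Lsh i a) j = (lam j - sc a * lam i) * Ej"
  proof -
    have "DD (Lsh i a) j = (Lsh i a j - Lsh i a i) * prod_list (map (\<lambda>k. Lsh i a j - Lsh i a k) (filter (\<lambda>k. k\<noteq>i \<and> k\<noteq>j) [0..<n]))"
      unfolding DD_def filter_swap[of j i, symmetric] by (rule two_factor[OF j i ji]) (intro ccs_diff ccLa j)
    then show ?thesis unfolding Ej_def by (simp only: mapLa Li)
  qed
  have D4: "DD (Lsh j b) i = (lam i - sc b * lam j) * Ei"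
  proof -
    have "DD (Lsh j b) i = (Lsh j b i - Lsh j b j) * prod_list (map (\<lambda>k. Lsh j b i - Lsh j b k) (filter (\<lambda>k. k\<noteq>i \<and> k\<noteq>j) [0..<n]))"
      unfolding DD_def by (rule two_factor[OF i j False]) (intro ccs_diff ccLb i)
    then show ?thesis unfolding Ei_def by (simp only: mapLb Li)
  qed
  have invEi: "invertible_el Ei" unfolding Ei_def by (rule prod_list_inv) (auto intro: GD i)
  have invEj: "invertible_el Ej" unfolding Ej_def by (rule prod_list_inv) (auto intro: GD j)
  have invu: "invertible_el (lam i - lam j)" by (rule GD[OF i j False])
  have invp: "invertible_el (lam j - sc a * lam i)"
  proof -
    have "invertible_el (Lsh i a j - Lsh i a i)" using La i j ji unfolding okL_def by blast
    then show ?thesis using ji by (simp add: Lsh_def)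
  qed
  have invr: "invertible_el (lam i - sc b * lam j)"
  proof -
    have "invertible_el (Lsh j b i - Lsh j b j)" using Lb i j False unfolding okL_def by blast
    then show ?thesis using False by (simp add: Lsh_def)
  qed
  have I1: "ring_inv (DD lam i) = ring_inv Ei * ring_inv (lam i - lam j)"
    unfolding D1 using inv_mult(2)[OF invu invEi] .
  have I2: "ring_inv (DD lam j) = ring_inv Ej * (- ring_inv (lam i - lam j))"
  proof -
    have "lam j - lam i = - (lam i - lam j)" by simp
    then have "ring_inv (lam j - lam i) = - ring_inv (lam i - lam j)" using inv_neg(2)[OF invu] by simp
    moreover have "invertible_el (lam j - lam i)" using GD[OF j i ji] .
    ultimately show ?thesis unfolding D2 using inv_mult(2)[OF _ invEj] by simp
  qed
  have I3: "ring_inv (DD (Lsh i a) j) = ring_inv Ej * ring_inv (lam j - sc a * lam i)"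
    unfolding D3 using inv_mult(2)[OF invp invEj] .
  have I4: "ring_inv (DD (Lsh j b) i) = ring_inv Ei * ring_inv (lam i - sc b * lam j)"
    unfolding D4 using inv_mult(2)[OF invr invEi] .
  have sub: "{sc z, sc w, lam i, lam j, sc a, sc b, Rz, Rw, ring_inv Ei, ring_inv Ej,
        ring_inv (lam i - lam j), ring_inv (lam j - sc a * lam i), ring_inv (lam i - sc b * lam j)} \<subseteq> ccs"
  proof -
    have "Rz \<in> ccs" "Rw \<in> ccs" unfolding Rz_def Rw_def by (auto intro!: ccs_prod cc1)
    moreover have "Ei \<in> ccs" "Ej \<in> ccs" unfolding Ei_def Ej_def using i j by (auto intro!: ccs_prod cc2)
    moreover have "lam i - lam j \<in> ccs" "lam j - sc a * lam i \<in> ccs" "lam i - sc b * lam j \<in> ccs"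
      using i j by (auto intro!: ccs_diff ccs_mult ccs_lam ccs_sc)
    ultimately show ?thesis using i j invEi invEj invu invp invr
      by (auto intro!: ccs_inv ccs_sc ccs_lam)
  qed
  show ?thesis
    unfolding S_eq N1 N2 N3 N4 I1 I2 I3 I4 Rz_def[symmetric] Rw_def[symmetric]
    apply (rule absK)
    using sub ccs_comm apply blast
    using inv_lr(2)[OF invp] inv_lr(2)[OF invr] by simp_all
qed

lemma Fsym:
  assumes i: "i<n" and La: "okL (Lsh i a)"
  shows "FF lam z * S_poly sc n lam i w + S_poly sc n lam i z * FF (Lsh i a) w
       = FF lam w * S_poly sc n lam i z + S_poly sc n lam i w * FF (Lsh i a) z"
proof -
  define t where "t = (\<Sum>k\<in>{..<n}-{i}. lam k)"
  have s1: "(\<Sum>k<n. lam k) = lam i + t" unfolding t_def using i by (simp add: sum.remove)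
  have s2: "(\<Sum>k<n. Lsh i a k) = sc a * lam i + t"
  proof -
    have "(\<Sum>k<n. Lsh i a k) = Lsh i a i + (\<Sum>k\<in>{..<n}-{i}. Lsh i a k)" using i by (simp add: sum.remove)
    also have "(\<Sum>k\<in>{..<n}-{i}. Lsh i a k) = t" unfolding t_def Lsh_def by (rule sum.cong) auto
    finally show ?thesis by (simp add: Lsh_def)
  qed
  have ccLa: "\<And>k. k<n \<Longrightarrow> Lsh i a k \<in> ccs" using La unfolding okL_def by blast
  have p1: "\<And>x. prod_list (map (\<lambda>k. sc x - lam k) [0..<n]) = (sc x - lam i) * NN lam i x"
    unfolding NN_def by (rule one_factor[OF i]) (intro ccs_diff ccs_sc ccs_lam)
  have p2: "\<And>x. prod_list (map (\<lambda>k. sc x - Lsh i a k) [0..<n]) = (sc x - sc a * lam i) * NN lam i x"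
  proof -
    fix x
    have "prod_list (map (\<lambda>k. sc x - Lsh i a k) [0..<n]) = (sc x - Lsh i a i) * NN (Lsh i a) i x"
      unfolding NN_def by (rule one_factor[OF i]) (intro ccs_diff ccs_sc ccLa)
    then show "?thesis x" unfolding NN_sh by (simp add: Lsh_def)
  qed
  have F1: "\<And>x. FF lam x = (sc x + (lam i + t)) * ((sc x - lam i) * NN lam i x)"
    unfolding FF_def s1 p1 ..
  have F2: "\<And>x. FF (Lsh i a) x = (sc x + (sc a * lam i + t)) * ((sc x - sc a * lam i) * NN lam i x)"
    unfolding FF_def s2 p2 ..
  have sub: "{sc z, sc w, lam i, t, sc a, NN lam i z, NN lam i w, ring_inv (DD lam i)} \<subseteq> ccs"
    unfolding t_def using i okL_lam
    by (auto intro!: ccs_sc ccs_lam ccs_sum NN_ccs ccs_inv DD_ccs DD_inv)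
  show ?thesis unfolding F1 F2 S_eq
    by (rule absF) (use sub ccs_comm in blast)
qed

lemma pairsym:
  assumes i: "i<n" and j: "j<n" and m: "invertible_el m" and m': "invertible_el m'"
    and cm: "\<forall>k<n. m*lam k = Lsh i a k*m"
    and cm': "\<forall>k<n. m'*lam k = Lsh j b k*m'"
    and mm: "m*m' = m'*m"
  shows "S_poly sc n lam i z*m*(S_poly sc n lam j w*m') + S_poly sc n lam j z*m'*(S_poly sc n lam i w*m)
       = S_poly sc n lam i w*m*(S_poly sc n lam j z*m') + S_poly sc n lam j w*m'*(S_poly sc n lam i z*m)"
proof -
  have La: "okL (Lsh i a)" by (rule okL_sh[OF i m]) (use cm in auto)
  have Lb: "okL (Lsh j b)" by (rule okL_sh[OF j m']) (use cm' in auto)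
  have c1: "\<And>x. m*S_poly sc n lam j x = S_poly sc n (Lsh i a) j x*m" by (rule S_conj[OF okL_lam m _ j]) (use cm in auto)
  have c2: "\<And>x. m'*S_poly sc n lam i x = S_poly sc n (Lsh j b) i x*m'" by (rule S_conj[OF okL_lam m' _ i]) (use cm' in auto)
  have e1: "\<And>x y. S_poly sc n lam i x*m*(S_poly sc n lam j y*m') = S_poly sc n lam i x*S_poly sc n (Lsh i a) j y*(m*m')"
  proof -
    fix x y
    have "S_poly sc n lam i x*m*(S_poly sc n lam j y*m') = S_poly sc n lam i x*(m*S_poly sc n lam j y)*m'"
      by (simp add: mult.assoc)
    then show "?thesis x y" unfolding c1 by (simp add: mult.assoc)
  qed
  have e2: "\<And>x y. S_poly sc n lam j x*m'*(S_poly sc n lam i y*m) = S_poly sc n lam j x*S_poly sc n (Lsh j b) i y*(m*m')"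
  proof -
    fix x y
    have "S_poly sc n lam j x*m'*(S_poly sc n lam i y*m) = S_poly sc n lam j x*(m'*S_poly sc n lam i y)*m"
      by (simp add: mult.assoc)
    then show "?thesis x y" unfolding c2 mm by (simp add: mult.assoc)
  qed
  show ?thesis unfolding e1 e2 distrib_right[symmetric] Ksym[OF i j La Lb, of z w] ..
qed

lemma Fm:
  assumes i: "i<n" and m: "invertible_el m" and cm: "\<forall>k<n. m*lam k = Lsh i a k*m"
  shows "FF lam z*(S_poly sc n lam i w*m) + S_poly sc n lam i z*m*FF lam w
       = FF lam w*(S_poly sc n lam i z*m) + S_poly sc n lam i w*m*FF lam z"
proof -
  have La: "okL (Lsh i a)" by (rule okL_sh[OF i m]) (use cm in auto)
  have c: "\<And>x. m*FF lam x = FF (Lsh i a) x*m" by (rule FF_conj) (use cm in auto)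
  have e: "\<And>x y. FF lam x*(S_poly sc n lam i y*m) + S_poly sc n lam i x*m*FF lam y
      = (FF lam x*S_poly sc n lam i y + S_poly sc n lam i x*FF (Lsh i a) y)*m"
  proof -
    fix x y
    have "S_poly sc n lam i x*m*FF lam y = S_poly sc n lam i x*(m*FF lam y)" by (simp add: mult.assoc)
    then show "?thesis x y" unfolding c by (simp add: mult.assoc distrib_right)
  qed
  show ?thesis unfolding e Fsym[OF i La, of z w] ..
qed

end


lemma exp4: "(a+b)*(c+d) = a*c + (a*d + b*c) + b*(d::'a::ring_1)" by (simp add: algebra_simps)

theorem mainTheorem6:
  fixes sc :: "complex \<Rightarrow> 'a::ring_1"
    and n :: nat and q :: complex
    and lam mu :: "nat \<Rightarrow> 'a"
  assumes "n \<ge> 1" and "q \<noteq> 0"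
    and "central_scalar_hom sc"
    and "\<And>i k. i < n \<Longrightarrow> k < n \<Longrightarrow> lam i * lam k = lam k * lam i"
    and "\<And>i k. i < n \<Longrightarrow> k < n \<Longrightarrow> i \<noteq> k \<Longrightarrow> invertible_el (lam i - lam k)"
    and "\<And>i k. i < n \<Longrightarrow> k < n \<Longrightarrow> mu i * mu k = mu k * mu i"
    and "\<And>i. i < n \<Longrightarrow> invertible_el (mu i)"
    and "\<And>j. j < n \<Longrightarrow> mu j * lam j = sc q * lam j * mu j"
    and "\<And>i j. i < n \<Longrightarrow> j < n \<Longrightarrow> i \<noteq> j \<Longrightarrow> mu j * lam i = lam i * mu j"
  shows "\<forall>z w. P_op sc n lam mu z * P_op sc n lam mu w = P_op sc n lam mu w * P_op sc n lam mu z"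
proof (intro allI)
  fix z w
  note q0 = assms(2) and MC = assms(6) and muI = assms(7) and MQ = assms(8) and HLm = assms(9)
  interpret T: toda sc n lam using assms(3,4,5) by unfold_locales auto
  define nu where "nu i = ring_inv (mu i)" for i
  have nuI: "\<And>i. i<n \<Longrightarrow> invertible_el (nu i)" unfolding nu_def using muI inv_inv_el by blast
  have mn1: "\<And>i. i<n \<Longrightarrow> mu i * nu i = 1" unfolding nu_def using muI inv_lr by blast
  have nm1: "\<And>i. i<n \<Longrightarrow> nu i * mu i = 1" unfolding nu_def using muI inv_lr by blast
  have cmu: "\<And>i k. i<n \<Longrightarrow> k<n \<Longrightarrow> mu i * lam k = T.Lsh i q k * mu i"
  proof -
    fix i k assume i: "i<n" and k: "k<n"
    show "mu i * lam k = T.Lsh i q k * mu i"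
    proof (cases "k = i")
      case True then show ?thesis using MQ[OF i] by (simp add: T.Lsh_def)
    next
      case False then show ?thesis using HLm[OF k i False] by (simp add: T.Lsh_def)
    qed
  qed
  have cnu: "\<And>i k. i<n \<Longrightarrow> k<n \<Longrightarrow> nu i * lam k = T.Lsh i (1/q) k * nu i"
  proof -
    fix i k assume i: "i<n" and k: "k<n"
    show "nu i * lam k = T.Lsh i (1/q) k * nu i"
    proof (cases "k = i")
      case True
      have "lam i * nu i = (nu i * mu i) * lam i * nu i" using nm1[OF i] by simp
      also have "\<dots> = nu i * (mu i * lam i) * nu i" by (simp add: mult.assoc)
      also have "\<dots> = nu i * (sc q * lam i * mu i) * nu i" using MQ[OF i] by simp
      also have "\<dots> = (nu i * sc q) * lam i * (mu i * nu i)" by (simp add: mult.assoc)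
      also have "\<dots> = (sc q * nu i) * lam i" using mn1[OF i] T.sc_central[of q "nu i"] by simp
      also have "\<dots> = sc q * (nu i * lam i)" by (simp add: mult.assoc)
      finally have e: "lam i * nu i = sc q * (nu i * lam i)" .
      have "sc (1/q) * lam i * nu i = sc (1/q) * (lam i * nu i)" by (simp add: mult.assoc)
      also have "\<dots> = (sc (1/q) * sc q) * (nu i * lam i)" unfolding e by (simp add: mult.assoc)
      also have "sc (1/q) * sc q = 1" using q0 T.sc_mult[of "1/q" q, symmetric] T.sc_one by simp
      finally show ?thesis using True by (simp add: T.Lsh_def)
    next
      case False
      have "lam k * mu i = mu i * lam k" using HLm[OF k i False] by simp
      then have "lam k * nu i = nu i * lam k" unfolding nu_def by (rule inv_comm[OF muI[OF i]])
      then show ?thesis using False by (simp add: T.Lsh_def)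
    qed
  qed
  have mm: "\<And>i j. i<n \<Longrightarrow> j<n \<Longrightarrow> mu i * mu j = mu j * mu i" using MC by blast
  have mn: "\<And>i j. i<n \<Longrightarrow> j<n \<Longrightarrow> mu i * nu j = nu j * mu i"
    unfolding nu_def using inv_comm muI MC by blast
  have nm: "\<And>i j. i<n \<Longrightarrow> j<n \<Longrightarrow> nu i * mu j = mu j * nu i"
    using mn by metis
  have nn: "\<And>i j. i<n \<Longrightarrow> j<n \<Longrightarrow> nu i * nu j = nu j * nu i"
  proof -
    fix i j assume i: "i<n" and j: "j<n"
    show "nu i * nu j = nu j * nu i" unfolding nu_def[of j] using inv_comm[OF muI[OF j] nm[OF i j]] .
  qed
  have cmuA: "\<And>i. i<n \<Longrightarrow> \<forall>k<n. mu i * lam k = T.Lsh i q k * mu i" using cmu by blast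
  have cnuA: "\<And>i. i<n \<Longrightarrow> \<forall>k<n. nu i * lam k = T.Lsh i (1/q) k * nu i" using cnu by blast
  define S where "S x i = S_poly sc n lam i x" for x i
  define A where "A i = mu i + nu i" for i
  define Y where "Y i j x y = S x i * A i * (S y j * A j)" for i j x y
  define B where "B x = (\<Sum>i<n. S x i * A i)" for x
  have Peq: "\<And>x. P_op sc n lam mu x = sc (1/2) * (T.FF lam x + B x)"
    unfolding P_op_def T.FF_def B_def S_def A_def nu_def ..
  have pairY: "\<And>i j. i<n \<Longrightarrow> j<n \<Longrightarrow> Y i j z w + Y j i z w = Y i j w z + Y j i w z"
  proof -
    fix i j assume i: "i<n" and j: "j<n"
    have ex: "\<And>x y. Y i j x y + Y j i x y =
        (S x i*mu i*(S y j*mu j) + S x j*mu j*(S y i*mu i)) + (S x i*mu i*(S y j*nu j) + S x j*nu j*(S y i*mu i))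
      + ((S x i*nu i*(S y j*mu j) + S x j*mu j*(S y i*nu i)) + (S x i*nu i*(S y j*nu j) + S x j*nu j*(S y i*nu i)))"
      unfolding Y_def A_def by (simp add: algebra_simps)
    note p1 = T.pairsym[OF i j muI[OF i] muI[OF j] cmuA[OF i] cmuA[OF j] mm[OF i j], of z w, folded S_def]
    note p2 = T.pairsym[OF i j muI[OF i] nuI[OF j] cmuA[OF i] cnuA[OF j] mn[OF i j], of z w, folded S_def]
    note p3 = T.pairsym[OF i j nuI[OF i] muI[OF j] cnuA[OF i] cmuA[OF j] nm[OF i j], of z w, folded S_def]
    note p4 = T.pairsym[OF i j nuI[OF i] nuI[OF j] cnuA[OF i] cnuA[OF j] nn[OF i j], of z w, folded S_def]
    show "Y i j z w + Y j i z w = Y i j w z + Y j i w z"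
      unfolding ex p1 p2 p3 p4 ..
  qed
  have Fterm: "\<And>i. i<n \<Longrightarrow> T.FF lam z*(S w i*A i) + S z i*A i*T.FF lam w = T.FF lam w*(S z i*A i) + S w i*A i*T.FF lam z"
  proof -
    fix i assume i: "i<n"
    have ex: "\<And>x y. T.FF lam x*(S y i*A i) + S x i*A i*T.FF lam y =
       (T.FF lam x*(S y i*mu i) + S x i*mu i*T.FF lam y) + (T.FF lam x*(S y i*nu i) + S x i*nu i*T.FF lam y)"
      unfolding A_def by (simp add: algebra_simps)
    note f1 = T.Fm[OF i muI[OF i] cmuA[OF i], of z w, folded S_def]
    note f2 = T.Fm[OF i nuI[OF i] cnuA[OF i], of z w, folded S_def]
    show "T.FF lam z*(S w i*A i) + S z i*A i*T.FF lam w = T.FF lam w*(S z i*A i) + S w i*A i*T.FF lam z"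
      unfolding ex f1 f2 ..
  qed
  have BB: "\<And>x y. B x * B y = (\<Sum>i<n. \<Sum>j<n. Y i j x y)"
    unfolding B_def Y_def sum_distrib_right by (simp only: sum_distrib_left)
  have FB: "\<And>x y. T.FF lam x * B y + B x * T.FF lam y = (\<Sum>i<n. T.FF lam x*(S y i*A i) + S x i*A i*T.FF lam y)"
    unfolding B_def by (simp add: sum_distrib_left sum_distrib_right sum.distrib)
  have FF: "T.FF lam z * T.FF lam w = T.FF lam w * T.FF lam z"
    by (intro T.ccs_comm T.FF_ccs T.okL_lam)
  have FBs: "T.FF lam z * B w + B z * T.FF lam w = T.FF lam w * B z + B w * T.FF lam z"
    unfolding FB using Fterm by (intro sum.cong) auto
  define X where "X x y = (\<Sum>i<n. \<Sum>j<n. Y i j x y)" for x y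
  have sw: "\<And>x y. (\<Sum>i<n. \<Sum>j<n. Y j i x y) = X x y"
  proof -
    fix x y
    show "(\<Sum>i<n. \<Sum>j<n. Y j i x y) = X x y"
      unfolding X_def by (rule sum.swap[where g="\<lambda>i j. Y j i x y" and A="{..<n}" and B="{..<n}"])
  qed
  have "X z w + X z w = X z w + (\<Sum>i<n. \<Sum>j<n. Y j i z w)" by (simp only: sw)
  also have "\<dots> = (\<Sum>i<n. \<Sum>j<n. Y i j z w + Y j i z w)"
    unfolding X_def by (simp add: sum.distrib)
  also have "\<dots> = (\<Sum>i<n. \<Sum>j<n. Y i j w z + Y j i w z)"
    using pairY by (intro sum.cong refl) auto
  also have "\<dots> = X w z + (\<Sum>i<n. \<Sum>j<n. Y j i w z)"
    unfolding X_def by (simp add: sum.distrib)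
  also have "\<dots> = X w z + X w z" by (simp only: sw)
  finally have XX: "X z w + X z w = X w z + X w z" .
  have half: "\<And>a. sc (1/2) * (a + a) = a"
  proof -
    fix a
    have "sc (1/2) * (a + a) = (sc (1/2) + sc (1/2)) * a" by (simp add: algebra_simps)
    also have "sc (1/2) + sc (1/2) = 1" using T.sc_add[of "1/2" "1/2", symmetric] T.sc_one by simp
    finally show "sc (1/2) * (a + a) = a" by simp
  qed
  have Xs: "X z w = X w z" using arg_cong[OF XX, of "\<lambda>t. sc (1/2) * t"] half by simp
  have GG: "(T.FF lam z + B z) * (T.FF lam w + B w) = (T.FF lam w + B w) * (T.FF lam z + B z)"
    unfolding exp4 BB X_def[symmetric] FF FBs Xs ..
  have scm: "\<And>x y. sc (1/2) * x * (sc (1/2) * y) = sc (1/2) * (sc (1/2) * (x * y))"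
    by (metis mult.assoc T.sc_central)
  show "P_op sc n lam mu z * P_op sc n lam mu w = P_op sc n lam mu w * P_op sc n lam mu z"
    unfolding Peq scm GG ..
qed


end
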